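(* Let $\bm A=(A_1,\dots,A_d)$ be Hermitian matrices in $M_n(\mathbb{C})$, $B\in M_n(\mathbb{C})$, and $(\bm\lambda,\nu)\in\mathbb{R}^d\times\mathbb{C}$. Then $$\left|\bar\mu^{C}_{(\bm\lambda,\nu)}(\bm A,B)-\dot\mu^{C}_{(\bm\lambda,\nu)}(\bm A,B)\right|\le\sqrt N\,\big\|(B-\nu I)-(B-\nu I)^\dagger\big\|+\Delta\big(L_{(\bm\lambda,\nu)}(\bm A,B)\big),$$ where $N=2mn$ is the size of $L_{(\bm\lambda,\nu)}(\bm A,B)$.
   Context: Let $n,d,m$ be positive integers. Fix Hermitian matrices $\Gamma_1,\dots,\Gamma_d\in M_{2m}(\mathbb{C})$ with $\Gamma_i^2=I_{2m}$ and $\Gamma_i\Gamma_j=-\Gamma_j\Gamma_i$ for $i\neq j$ (a Clifford representation; the paper uses a specific one built from Pauli matrices). Write $P=\begin{bmatrix} I_m&0\\0&0_m\end{bmatrix}$ and $Q=\begin{bmatrix}0_m&0\\0&I_m\end{bmatrix}$ in $M_{2m}(\mathbb{C})$. For a $d$-tuple $\bm A=(A_1,\dots,A_d)$ of Hermitian matrices in $M_n(\mathbb{C})$, a matrix $B\in M_n(\mathbb{C})$ (not necessarily Hermitian or normal), and a probe site $(\bm\lambda,\nu)\in\mathbb{R}^d\times\mathbb{C}$, the non-Hermitian spectral localizer is $$L_{(\bm\lambda,\nu)}(\bm A,B)=\sum_{i=1}^d (A_i-\lambda_i I)\otimes\Gamma_i+(B-\nu I)\otimes P-(B-\nu I)^\dagger\otimes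 Q\in M_{2mn}(\mathbb{C}).$$ The Clifford radial gap is $\dot\mu^{C}_{(\bm\lambda,\nu)}(\bm A,B)=\sigma_{\min}\big(L_{(\bm\lambda,\nu)}(\bm A,B)\big)$ and the Clifford linear gap is $\bar\mu^{C}_{(\bm\lambda,\nu)}(\bm A,B)=\min\{|\mathrm{Re}(z)|:z\in\mathrm{Spec}(L_{(\bm\lambda,\nu)}(\bm A,B))\}$. For a square matrix $M$, its deviation from normality is $\Delta(M)=\inf\{\|U\|: M=W(D+U)W^\dagger\text{ a Schur decomposition, } W\text{ unitary}, D\text{ diagonal}, U\text{ strictly upper triangular}\}$. Matrix norms are operator norms. *)

theory Defs
  imports "HOL-Analysis.Analysis"
begin

text \<open>Complex square matrices are indexed by finite types; the Euclidean (l2) norm on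
  complex^'n is the library norm, so the operator norm of M is onorm of the map x -> M *v x.\<close>

definition mat_adj :: "complex^'n^'m \<Rightarrow> complex^'m^'n" where
  "mat_adj M = (\<chi> i j. cnj (M $ j $ i))"

definition hermitian :: "complex^'n^'n \<Rightarrow> bool" where
  "hermitian M \<longleftrightarrow> mat_adj M = M"

definition unitary_mat :: "complex^'n^'n \<Rightarrow> bool" where
  "unitary_mat W \<longleftrightarrow> mat_adj W ** W = mat 1"

definition op_norm :: "complex^'n^'m \<Rightarrow> real" where
  "op_norm M = onorm (\<lambda>x. M *v x)"

definition kron :: "complex^'n^'n \<Rightarrow> complex^'k^'k \<Rightarrow> complex^('n \<times> 'k)^('n \<times> 'k)" where
  "kron A G = (\<chi> p q. A $ fst p $ fst q * G $ snd p $ snd q)"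

definition is_eigenvalue :: "complex^'n^'n \<Rightarrow> complex \<Rightarrow> bool" where
  "is_eigenvalue M z \<longleftrightarrow> (\<exists>v. v \<noteq> 0 \<and> M *v v = z *s v)"

definition spec :: "complex^'n^'n \<Rightarrow> complex set" where
  "spec M = {z. is_eigenvalue M z}"

definition sigma_min :: "complex^'n^'n \<Rightarrow> real" where
  "sigma_min M = sqrt (Min (Re ` spec (mat_adj M ** M)))"

definition diagonal_mat :: "complex^'n^'n \<Rightarrow> bool" where
  "diagonal_mat D \<longleftrightarrow> (\<forall>i j. i \<noteq> j \<longrightarrow> D $ i $ j = 0)"

definition strictly_upper :: "('n \<Rightarrow> 'n \<Rightarrow> bool) \<Rightarrow> complex^'n^'n \<Rightarrow> bool" where
  "strictly_upper lt U \<longleftrightarrow> (\<forall>i j. \<not> lt i j \<longrightarrow> U $ i $ j = 0)"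

text \<open>Deviation from normality (Henrici), with "upper triangular" taken w.r.t. the strict
  linear order less on the index type.\<close>
definition dev_normality :: "('n \<Rightarrow> 'n \<Rightarrow> bool) \<Rightarrow> complex^'n^'n \<Rightarrow> real" where
  "dev_normality lt M = Inf {op_norm U | U. \<exists>W D. unitary_mat W \<and> diagonal_mat D \<and>
      strictly_upper lt U \<and> M = W ** (D + U) ** mat_adj W}"

text \<open>Lexicographic strict order on the index type 'n x bool x 'm of the localizer
  (False < True), matching the block structure of the Kronecker product.\<close>
definition lex_less3 :: "('n::linorder \<times> bool \<times> 'm::linorder) \<Rightarrow> ('n \<times> bool \<times> 'm) \<Rightarrow> bool" where
  "lex_less3 p q \<longleftrightarrow> (case (p, q) of ((a, b, c), (a', b', c')) \<Rightarrow>
      a < a' \<or> (a = a' \<and> (b < b' \<or> (b = b' \<and> c < c'))))"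

text \<open>Clifford representation on C^(2m), indexed by bool x 'm; the block with first
  component False comes first in the (lexicographic) order.\<close>
definition P_proj :: "complex^(bool \<times> ('m::finite))^(bool \<times> 'm)" where
  "P_proj = (\<chi> p q. if p = q \<and> \<not> fst p then 1 else 0)"

definition Q_proj :: "complex^(bool \<times> ('m::finite))^(bool \<times> 'm)" where
  "Q_proj = (\<chi> p q. if p = q \<and> fst p then 1 else 0)"

definition clifford_rep :: "nat \<Rightarrow> (nat \<Rightarrow> complex^(bool \<times> ('m::finite))^(bool \<times> 'm)) \<Rightarrow> bool" where
  "clifford_rep d \<Gamma> \<longleftrightarrow> (\<forall>i<d. hermitian (\<Gamma> i) \<and> \<Gamma> i ** \<Gamma> i = mat 1) \<and>
     (\<forall>i<d. \<forall>j<d. i \<noteq> j \<longrightarrow> \<Gamma> i ** \<Gamma> j = - (\<Gamma> j ** \<Gamma> i))"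

text \<open>Non-Hermitian spectral localizer; A, Gamma, lambda indexed by 0..d-1.\<close>
definition localizer ::
  "nat \<Rightarrow> (nat \<Rightarrow> complex^(bool \<times> ('m::finite))^(bool \<times> 'm)) \<Rightarrow> (nat \<Rightarrow> complex^('n::finite)^'n) \<Rightarrow> complex^'n^'n
   \<Rightarrow> (nat \<Rightarrow> real) \<Rightarrow> complex \<Rightarrow> complex^('n \<times> bool \<times> 'm)^('n \<times> bool \<times> 'm)" where
  "localizer d \<Gamma> A B lam \<nu> =
     (\<Sum>i<d. kron (A i - mat (complex_of_real (lam i))) (\<Gamma> i))
     + kron (B - mat \<nu>) P_proj - kron (mat_adj (B - mat \<nu>)) Q_proj"

definition clifford_radial_gap where
  "clifford_radial_gap d \<Gamma> A B lam \<nu> = sigma_min (localizer d \<Gamma> A B lam \<nu>)"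

definition clifford_linear_gap where
  "clifford_linear_gap d \<Gamma> A B lam \<nu> =
     Min ((\<lambda>z. \<bar>Re z\<bar>) ` spec (localizer d \<Gamma> A B lam \<nu>))"

end

theory Submission imports Defs "Jordan_Normal_Form.Char_Poly" begin
no_notation Matrix.vec_index (infixl "$" 100)
hide_const (open) Matrix.mat Matrix.vec Matrix.row Matrix.col Determinant.det Matrix.diagonal_mat
lemmas cvec_eq_iff = Finite_Cartesian_Product.vec_eq_iff
lemmas cmat_def = Finite_Cartesian_Product.mat_def

definition cinner :: "complex^'k \<Rightarrow> complex^'k \<Rightarrow> complex" where
  "cinner x y = (\<Sum>i\<in>UNIV. cnj (x$i) * y$i)"

lemma norm_sq_vec: "(norm (x::complex^'k))^2 = (\<Sum>i\<in>UNIV. (norm (x$i))^2)"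
  unfolding norm_vec_def L2_set_def by (simp add: sum_nonneg)

lemma cinner_self: "cinner x x = complex_of_real ((norm x)^2)"
  unfolding cinner_def norm_sq_vec of_real_sum
  by (rule sum.cong) (auto, metis complex_norm_square mult.commute of_real_power)

lemma cinner_adj: "cinner x (M *v y) = cinner (mat_adj M *v x) y"
proof -
  have "cinner x (M *v y) = (\<Sum>i\<in>UNIV. \<Sum>j\<in>UNIV. cnj (x$i) * M$i$j * y$j)"
    unfolding cinner_def matrix_vector_mult_def by (simp add: sum_distrib_left mult_ac)
  also have "\<dots> = (\<Sum>j\<in>UNIV. \<Sum>i\<in>UNIV. cnj (x$i) * M$i$j * y$j)"
    by (rule sum.swap)
  also have "\<dots> = cinner (mat_adj M *v x) y"
    unfolding cinner_def matrix_vector_mult_def mat_adj_def by (simp add: sum_distrib_right sum_distrib_left mult_ac)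
  finally show ?thesis .
qed

lemma cinner_scale: "cinner x (c *s y) = c * cinner x y"
  unfolding cinner_def by (simp add: sum_distrib_left mult_ac)

lemma cinner_diff: "cinner x (y - z) = cinner x y - cinner x z"
  unfolding cinner_def by (simp add: sum_subtractf algebra_simps)

lemma cinner_add: "cinner x (y + z) = cinner x y + cinner x z"
  unfolding cinner_def by (simp add: sum.distrib algebra_simps)

lemma cinner_cnj: "cnj (cinner x y) = cinner y x"
  unfolding cinner_def by (simp add: mult.commute)

lemma cinner_CS: "norm (cinner x y) \<le> norm x * norm y"
proof -
  have "norm (cinner x y) \<le> (\<Sum>i\<in>UNIV. norm (x$i) * norm (y$i))"
    unfolding cinner_def by (rule order_trans[OF norm_sum]) (simp add: norm_mult)
  also have "\<dots> \<le> L2_set (\<lambda>i. norm (x$i)) UNIV * L2_set (\<lambda>i. norm (y$i)) UNIV"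
    using L2_set_mult_ineq[of "\<lambda>i. norm (x$i)" "\<lambda>i. norm (y$i)" UNIV] by simp
  finally show ?thesis by (simp add: norm_vec_def)
qed

lemma mat_adj_adj[simp]: "mat_adj (mat_adj M) = M"
  unfolding mat_adj_def by (simp add: cvec_eq_iff)

lemma mat_adj_mult: "mat_adj (A ** B) = mat_adj B ** mat_adj A"
  unfolding mat_adj_def matrix_matrix_mult_def by (simp add: cvec_eq_iff mult.commute)

lemma mat_adj_add: "mat_adj (A + B) = mat_adj A + mat_adj B"
  unfolding mat_adj_def by (simp add: cvec_eq_iff)

lemma mat_adj_diff: "mat_adj (A - B) = mat_adj A - mat_adj B"
  unfolding mat_adj_def by (simp add: cvec_eq_iff)

lemma mat_adj_mat: "mat_adj (mat c :: complex^'k^'k) = mat (cnj c)"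
  unfolding mat_adj_def by (simp add: cvec_eq_iff cmat_def)

lemma mat_adj_sum: "mat_adj (\<Sum>i\<in>I. f i) = (\<Sum>i\<in>I. mat_adj (f i))"
  by (induction I rule: infinite_finite_induct) (auto simp: mat_adj_add mat_adj_def cvec_eq_iff)

lemma op_norm_bound: "norm ((M::complex^'k^'l) *v x) \<le> op_norm M * norm x"
  unfolding op_norm_def by (rule onorm) simp

lemma op_norm_nonneg: "0 \<le> op_norm (M::complex^'k^'l)"
  unfolding op_norm_def by (rule onorm_pos_le) simp

lemma unitary_right: "unitary_mat W \<Longrightarrow> W ** mat_adj W = mat 1"
  unfolding unitary_mat_def using matrix_left_right_inverse by blast

lemma unitary_norm: assumes "unitary_mat W" shows "norm (W *v x) = norm x"
proof -
  have "cinner (W *v x) (W *v x) = cinner x x"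
    by (simp add: cinner_adj matrix_vector_mul_assoc assms[unfolded unitary_mat_def])
  then have "(norm (W *v x))^2 = (norm x)^2" unfolding cinner_self of_real_eq_iff .
  then show ?thesis by (simp add: power2_eq_iff_nonneg)
qed

lemma unitary_adj: "unitary_mat W \<Longrightarrow> unitary_mat (mat_adj W)"
  unfolding unitary_mat_def by (simp add: unitary_right[unfolded unitary_mat_def])

lemma unitary_mult: "unitary_mat W \<Longrightarrow> unitary_mat Y \<Longrightarrow> unitary_mat (W ** Y)"
  unfolding unitary_mat_def mat_adj_mult
  by (metis matrix_mul_assoc matrix_mul_lid)

lemma unitary_one: "unitary_mat (mat 1 :: complex^'k^'k)"
  unfolding unitary_mat_def by (simp add: mat_adj_mat)

lemma sum_delta_r: "(\<Sum>i\<in>UNIV. f i * (if i = k then 1 else 0)) = (f (k::'k::finite) :: complex)"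
proof -
  have "(\<Sum>i\<in>UNIV. f i * (if i = k then 1 else 0)) = (\<Sum>i\<in>UNIV. if i = k then f k else 0)"
    by (rule sum.cong) auto
  then show ?thesis by simp
qed

lemma sum_delta_l: "(\<Sum>i\<in>UNIV. (if i = k then 1 else 0) * f i) = (f (k::'k::finite) :: complex)"
proof -
  have "(\<Sum>i\<in>UNIV. (if i = k then 1 else 0) * f i) = (\<Sum>i\<in>UNIV. if i = k then f k else 0)"
    by (rule sum.cong) auto
  then show ?thesis by simp
qed

lemma sum_delta_l': "(\<Sum>i\<in>UNIV. (if k = i then 1 else 0) * f i) = (f (k::'k::finite) :: complex)"
  using sum_delta_l[of k f] by (simp add: eq_commute)

lemma col_extract: "((A::complex^'k^'l) *v axis j 1) $ i = A $ i $ j"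
  by (simp add: matrix_vector_mult_def axis_def sum_delta_r)

lemma cinner_diff_left: "cinner (x - y) z = cinner x z - cinner y z"
  unfolding cinner_def by (simp add: sum_subtractf algebra_simps)

lemma cinner_axis_left: "cinner (axis k 1) v = v $ k"
  unfolding cinner_def axis_def by (simp add: if_distrib[of cnj] sum_delta_l cong: if_cong)

lemma cinner_axis_right: "cinner v (axis k 1) = cnj (v $ k)"
  unfolding cinner_def axis_def by (simp add: sum_delta_r)

lemma norm_axis_c: "norm (axis k (1::complex) :: complex^'k) = 1"
proof -
  have "complex_of_real ((norm (axis k (1::complex) :: complex^'k))^2) = 1"
    using cinner_self[of "axis k 1 :: complex^'k"] cinner_axis_left[of k "axis k 1"] by simp
  then have "(norm (axis k (1::complex) :: complex^'k))^2 = 1" by (metis of_real_eq_1_iff)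
  then show ?thesis by (simp add: power2_eq_1_iff)
qed

lemma norm_smult_vec: "norm (c *s (x::complex^'k)) = norm c * norm x"
  unfolding norm_vec_def by (simp add: norm_mult L2_set_right_distrib)


lemma matrix_eq_c: "(\<And>x. (A::complex^'k^'k) *v x = B *v x) \<Longrightarrow> A = B"
  using matrix_eq by blast

lemma householder:
  fixes u :: "complex^'k" and R :: "'k set"
  assumes kR: "k \<in> R" and u0: "u \<noteq> 0" and uR: "\<forall>i. i \<notin> R \<longrightarrow> u$i = 0"
  shows "\<exists>Y \<alpha>. unitary_mat Y \<and> mat_adj Y = Y \<and> \<alpha> \<noteq> 0 \<and> Y *v axis k 1 = \<alpha> *s u
      \<and> (\<forall>v. (\<forall>i\<in>R. v$i = 0) \<longrightarrow> Y *v v = v)"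
proof -
  define nu where "nu = norm u"
  have nu0: "nu > 0" using u0 by (simp add: nu_def)
  define \<beta> where "\<beta> = u$k / complex_of_real nu"
  define a where "a = (if \<beta> = 0 then 1 else cnj \<beta> / complex_of_real (cmod \<beta>))"
  have a1: "norm a = 1" by (auto simp: a_def norm_divide)
  define y where "y = (a / complex_of_real nu) *s u"
  have ny: "norm y = 1" unfolding y_def norm_smult_vec using a1 nu0
    by (simp add: norm_divide nu_def)
  define r where "r = cmod \<beta>"
  have yk: "y $ k = complex_of_real r"
  proof (cases "\<beta> = 0")
    case True then show ?thesis using nu0 by (simp add: y_def r_def \<beta>_def)
  next
    case False
    have "y $ k = cnj \<beta> * \<beta> / complex_of_real (cmod \<beta>)"
      using False by (simp add: y_def a_def \<beta>_def)
    also have "\<dots> = complex_of_real (cmod \<beta>)" using False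
      by (simp add: complex_norm_square[symmetric] power2_eq_square mult.commute)
    finally show ?thesis by (simp add: r_def)
  qed
  define e where "e = (axis k 1 :: complex^'k)"
  define w where "w = e - y"
  define c where "c = 2 / (norm w)^2"
  define Y where "Y = (\<chi> i j. (if i = j then 1 else 0) - complex_of_real c * w$i * cnj (w$j))"
  have Yv: "Y *v x = x - (complex_of_real c * cinner w x) *s w" for x
  proof -
    have "(Y *v x)$i = (x - (complex_of_real c * cinner w x) *s w)$i" for i
    proof -
      have "(Y *v x)$i = (\<Sum>j\<in>UNIV. (if i = j then 1 else 0) * x$j)
           - (\<Sum>j\<in>UNIV. complex_of_real c * w$i * (cnj (w$j) * x$j))"
        by (simp add: matrix_vector_mult_def Y_def algebra_simps sum_subtractf)
      also have "\<dots> = x$i - complex_of_real c * w$i * cinner w x"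
        unfolding sum_delta_l' cinner_def by (simp add: sum_distrib_left)
      finally show ?thesis by simp
    qed
    then show ?thesis by (simp add: cvec_eq_iff)
  qed
  have Yadj: "mat_adj Y = Y"
    unfolding Y_def mat_adj_def by (simp add: cvec_eq_iff mult_ac)
  have ww: "cinner w w = complex_of_real ((norm w)^2)" by (rule cinner_self)
  have YY: "Y *v (Y *v x) = x" for x
  proof (cases "w = 0")
    case True then show ?thesis by (simp add: Yv)
  next
    case False
    then have "(norm w)^2 > 0" by simp
    then have cw: "complex_of_real c * cinner w w = 2" unfolding ww c_def
      by (simp flip: of_real_mult)
    have "cinner w (Y *v x) = - cinner w x"
      unfolding Yv cinner_diff cinner_scale
      by (simp add: algebra_simps cw[simplified mult.commute] )
    then show ?thesis unfolding Yv[of "Y *v x"] by (simp add: Yv)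
  qed
  have YYm: "Y ** Y = mat 1"
    by (rule matrix_eq_c) (simp add: matrix_vector_mul_assoc[symmetric] YY)
  have unit: "unitary_mat Y" unfolding unitary_mat_def Yadj YYm ..
  have we: "cinner w e = 1 - complex_of_real r"
    unfolding w_def e_def cinner_diff_left cinner_axis_right cinner_axis_left by (simp add: yk)
  have nw: "complex_of_real ((norm w)^2) = 2 - 2 * complex_of_real r"
  proof -
    have "cinner y y = 1" unfolding cinner_self ny by simp
    then show ?thesis unfolding ww[symmetric] unfolding w_def e_def cinner_diff_left cinner_diff
        cinner_axis_right cinner_axis_left by (simp add: yk)
  qed
  have Ye: "Y *v e = y"
  proof (cases "r = 1")
    case True
    then have "(norm w)^2 = 0" using nw by (simp flip: of_real_eq_iff)
    then have "w = 0" by simp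
    then show ?thesis by (simp add: Yv w_def)
  next
    case False
    have "complex_of_real ((norm w)^2) = complex_of_real (2 - 2 * r)" using nw by simp
    then have nw': "(norm w)^2 = 2 - 2 * r" by (simp only: of_real_eq_iff)
    have "c * (1 - r) = 1" unfolding c_def nw' using False by (simp add: field_simps)
    then have "complex_of_real c * cinner w e = 1"
      unfolding we by (metis of_real_1 of_real_diff of_real_mult)
    then show ?thesis unfolding Yv by (simp add: w_def)
  qed
  have Yfix: "Y *v v = v" if v: "\<forall>i\<in>R. v$i = 0" for v
  proof -
    have "cinner w v = 0" unfolding cinner_def
    proof (rule sum.neutral, intro ballI)
      fix i show "cnj (w$i) * v$i = 0"
      proof (cases "i \<in> R")
        case True then show ?thesis using v by simp
      next
        case False then have "i \<noteq> k" using kR by auto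
        then show ?thesis using False uR by (simp add: w_def e_def y_def axis_def)
      qed
    qed
    then show ?thesis by (simp add: Yv)
  qed
  have "a / complex_of_real nu \<noteq> 0" using a1 nu0 by auto
  then show ?thesis using unit Yadj Ye Yfix unfolding e_def y_def by blast
qed

lemma eigvec_compress:
  fixes T :: "complex^'k^'k" and R :: "'k set"
  assumes "R \<noteq> {}"
  shows "\<exists>\<mu> u. u \<noteq> 0 \<and> (\<forall>i. i \<notin> R \<longrightarrow> u$i = 0) \<and> (\<forall>i\<in>R. (T *v u)$i = \<mu> * u$i)"
proof -
  define r where "r = card R"
  have fR: "finite R" by simp
  then obtain g where g: "bij_betw g {0..<r} R" using ex_bij_betw_nat_finite r_def by blast
  have r0: "r > 0" using assms fR by (simp add: r_def card_gt_0_iff)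
  define A where "A = Matrix.mat r r (\<lambda>(a,b). T $ g a $ g b)"
  have Ac: "A \<in> carrier_mat r r" by (simp add: A_def)
  from char_poly_factorized[OF Ac] obtain as where cp: "char_poly A = (\<Prod>a\<leftarrow>as. [:- a, 1:])"
    and len: "length as = r" by blast
  then obtain a as' where as: "as = a # as'" using r0 by (cases as) auto
  have "poly (char_poly A) a = 0" unfolding cp as by simp
  then have "eigenvalue A a" using eigenvalue_root_char_poly[OF Ac] by simp
  then obtain x where ev: "eigenvector A x a" unfolding eigenvalue_def by blast
  then have xc: "x \<in> carrier_vec r" and x0: "x \<noteq> 0\<^sub>v r" and Ax: "A *\<^sub>v x = a \<cdot>\<^sub>v x"
    unfolding eigenvector_def using Ac by auto
  define gi where "gi = the_inv_into {0..<r} g"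
  have inj: "inj_on g {0..<r}" using g by (simp add: bij_betw_def)
  have gR: "g b \<in> R" if "b < r" for b using g that by (auto simp: bij_betw_def)
  have gig: "gi (g b) = b" if "b < r" for b unfolding gi_def using inj that by (simp add: the_inv_into_f_f)
  have Rg: "\<exists>b<r. i = g b" if "i \<in> R" for i using g that by (auto simp: bij_betw_def image_iff)
  define u where "u = (\<chi> i. if i \<in> R then Matrix.vec_index x (gi i) else 0)"
  have ug: "u $ g b = Matrix.vec_index x b" if "b < r" for b using that gR gig by (simp add: u_def)
  have u0: "u \<noteq> 0"
  proof
    assume "u = 0"
    then have "Matrix.vec_index x b = 0" if "b < r" for b using ug[OF that] by simp
    then have "x = 0\<^sub>v r" using xc by (intro eq_vecI) auto
    with x0 show False by simp
  qed
  have uR: "\<forall>i. i \<notin> R \<longrightarrow> u$i = 0" by (simp add: u_def)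
  have Tu: "(T *v u) $ i = a * u $ i" if iR: "i \<in> R" for i
  proof -
    obtain b where b: "b < r" "i = g b" using Rg[OF iR] by blast
    have "(T *v u) $ i = (\<Sum>j\<in>UNIV. T $ i $ j * u $ j)" by (simp add: matrix_vector_mult_def)
    also have "\<dots> = (\<Sum>j\<in>R. T $ i $ j * u $ j)"
      by (rule sum.mono_neutral_right) (auto simp: u_def)
    also have "\<dots> = (\<Sum>c\<in>{0..<r}. T $ i $ g c * u $ g c)"
      using sum.reindex_bij_betw[OF g, of "\<lambda>j. T $ i $ j * u $ j"] by simp
    also have "\<dots> = (\<Sum>c\<in>{0..<r}. T $ g b $ g c * Matrix.vec_index x c)"
      using b by (intro sum.cong) (auto simp: ug)
    also have "\<dots> = Matrix.vec_index (A *\<^sub>v x) b"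
      using b xc by (simp add: A_def scalar_prod_def)
    also have "\<dots> = a * Matrix.vec_index x b" using Ax b xc by simp
    also have "\<dots> = a * u $ i" using b ug by simp
    finally show ?thesis .
  qed
  show ?thesis using u0 uR Tu by blast
qed


definition sto :: "('k \<Rightarrow> 'k \<Rightarrow> bool) \<Rightarrow> bool" where
  "sto lt \<longleftrightarrow> (\<forall>x. \<not> lt x x) \<and> (\<forall>x y z. lt x y \<longrightarrow> lt y z \<longrightarrow> lt x z) \<and> (\<forall>x y. x \<noteq> y \<longrightarrow> lt x y \<or> lt y x)"

definition rk :: "('k \<Rightarrow> 'k \<Rightarrow> bool) \<Rightarrow> 'k \<Rightarrow> nat" where
  "rk lt i = card {j. lt j i}"

lemma sto_irr: "sto lt \<Longrightarrow> \<not> lt x x" unfolding sto_def by simp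
lemma sto_trans: "sto lt \<Longrightarrow> lt x y \<Longrightarrow> lt y z \<Longrightarrow> lt x z" unfolding sto_def by metis
lemma sto_tot: "sto lt \<Longrightarrow> x \<noteq> y \<Longrightarrow> lt x y \<or> lt y x" unfolding sto_def by simp

lemma rk_mono:
  fixes lt :: "'k::finite \<Rightarrow> 'k \<Rightarrow> bool"
  assumes "sto lt" "lt i j" shows "rk lt i < rk lt j"
proof -
  have "{x. lt x i} \<subseteq> {x. lt x j}" using sto_trans[OF assms(1) _ assms(2)] by auto
  moreover have "i \<in> {x. lt x j}" "i \<notin> {x. lt x i}" using assms sto_irr[OF assms(1)] by auto
  ultimately have "{x. lt x i} \<subset> {x. lt x j}" by blast
  then show ?thesis unfolding rk_def by (simp add: psubset_card_mono)
qed

lemma rk_iff: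
  fixes lt :: "'k::finite \<Rightarrow> 'k \<Rightarrow> bool"
  assumes "sto lt" shows "lt i j \<longleftrightarrow> rk lt i < rk lt j"
proof
  assume "lt i j" then show "rk lt i < rk lt j" by (rule rk_mono[OF assms])
next
  assume h: "rk lt i < rk lt j"
  show "lt i j"
  proof (rule ccontr)
    assume "\<not> lt i j"
    then have "i = j \<or> lt j i" using sto_tot[OF assms, of i j] by blast
    then show False using h rk_mono[OF assms, of j i] by auto
  qed
qed

lemma rk_inj:
  fixes lt :: "'k::finite \<Rightarrow> 'k \<Rightarrow> bool"
  assumes "sto lt" shows "inj (rk lt)"
  unfolding inj_def
proof (intro allI impI)
  fix x y assume e: "rk lt x = rk lt y"
  show "x = y"
  proof (rule ccontr)
    assume "x \<noteq> y"
    then have "lt x y \<or> lt y x" using sto_tot[OF assms] by blast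
    then show False using rk_mono[OF assms, of x y] rk_mono[OF assms, of y x] e by auto
  qed
qed

lemma rk_bound:
  fixes lt :: "'k::finite \<Rightarrow> 'k \<Rightarrow> bool"
  assumes "sto lt" shows "rk lt i < CARD('k)"
proof -
  have "i \<notin> {x. lt x i}" using sto_irr[OF assms] by simp
  then have "{x. lt x i} \<subset> UNIV" by blast
  then show ?thesis unfolding rk_def by (simp add: psubset_card_mono)
qed

lemma rk_surj:
  fixes lt :: "'k::finite \<Rightarrow> 'k \<Rightarrow> bool"
  assumes "sto lt" "n < CARD('k)" shows "\<exists>k. rk lt k = n"
proof -
  have sub: "rk lt ` UNIV \<subseteq> {0..<CARD('k)}" using rk_bound[OF assms(1)] by auto
  have "card (rk lt ` UNIV) = CARD('k)" using rk_inj[OF assms(1)] by (simp add: card_image)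
  then have "rk lt ` UNIV = {0..<CARD('k)}" using sub by (simp add: card_subset_eq)
  then have "n \<in> rk lt ` UNIV" using assms(2) by simp
  then show ?thesis by auto
qed

lemma mv_smult: "(A::complex^'k^'l) *v (c *s x) = c *s (A *v x)"
  by (simp add: matrix_vector_mult_def cvec_eq_iff sum_distrib_left mult_ac)

lemma mv_add: "(A::complex^'k^'l) *v (x + y) = A *v x + A *v y"
  by (simp add: matrix_vector_right_distrib)

lemma mv_diff: "(A::complex^'k^'l) *v (x - y) = A *v x - A *v y"
  by (simp add: matrix_vector_mult_def cvec_eq_iff sum_subtractf algebra_simps)

lemma schur_aux:
  fixes M :: "complex^'k^'k" and lt :: "'k \<Rightarrow> 'k \<Rightarrow> bool"
  assumes lt: "sto lt"
  shows "n \<le> CARD('k) \<Longrightarrow> \<exists>W. unitary_mat W \<and>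
     (\<forall>i j. rk lt j < n \<longrightarrow> rk lt j < rk lt i \<longrightarrow> (mat_adj W ** M ** W)$i$j = 0)"
proof (induction n)
  case 0
  then show ?case using unitary_one by blast
next
  case (Suc n)
  then obtain W where W: "unitary_mat W"
    and IH: "\<forall>i j. rk lt j < n \<longrightarrow> rk lt j < rk lt i \<longrightarrow> (mat_adj W ** M ** W)$i$j = 0" by auto
  define T where "T = mat_adj W ** M ** W"
  have nC: "n < CARD('k)" using Suc(2) by simp
  obtain k where k: "rk lt k = n" using rk_surj[OF lt nC] by blast
  define R where "R = {i. n \<le> rk lt i}"
  have kR: "k \<in> R" using k by (simp add: R_def)
  then obtain \<mu> u where u0: "u \<noteq> 0" and uR: "\<forall>i. i \<notin> R \<longrightarrow> u$i = 0"
    and Tu: "\<forall>i\<in>R. (T *v u)$i = \<mu> * u$i"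
    using eigvec_compress[of R T] by blast
  obtain Y \<alpha> where Y: "unitary_mat Y" and Yadj: "mat_adj Y = Y" and a0: "\<alpha> \<noteq> 0"
    and Ye: "Y *v axis k 1 = \<alpha> *s u" and Yfix: "\<forall>v. (\<forall>i\<in>R. v$i = 0) \<longrightarrow> Y *v v = v"
    using householder[OF kR u0 uR] by blast
  define W' where "W' = W ** Y"
  have W': "unitary_mat W'" unfolding W'_def using W Y by (rule unitary_mult)
  have T': "mat_adj W' ** M ** W' = Y ** T ** Y"
    unfolding W'_def T_def mat_adj_mult Yadj by (simp add: matrix_mul_assoc)
  have YY: "Y *v (Y *v x) = x" for x
    using Y unfolding unitary_mat_def Yadj by (simp add: matrix_vector_mul_assoc)
  have col: "(Y ** T ** Y)$i$j = (Y *v (T *v (Y *v axis j 1)))$i" for i j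
    by (simp add: matrix_vector_mul_assoc col_extract matrix_mul_assoc)
  have "(Y ** T ** Y)$i$j = 0" if j1: "rk lt j < Suc n" and j2: "rk lt j < rk lt i" for i j
  proof (cases "rk lt j < n")
    case True
    then have jR: "j \<notin> R" by (simp add: R_def)
    have "\<forall>l\<in>R. axis j (1::complex) $ l = 0" using jR by (auto simp: axis_def)
    then have "Y *v axis j 1 = axis j 1" using Yfix by blast
    moreover have "Y *v (T *v axis j 1) = T *v axis j 1"
    proof -
      have "\<forall>l\<in>R. (T *v axis j 1)$l = 0"
        using IH True unfolding col_extract T_def R_def by auto
      then show ?thesis using Yfix by blast
    qed
    ultimately show ?thesis unfolding col using IH True j2 by (simp add: col_extract T_def)
  next
    case False
    then have "rk lt j = n" using j1 by simp
    then have jk: "j = k" using k rk_inj[OF lt] by (simp add: inj_def)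
    define z where "z = T *v u - \<mu> *s u"
    have zR: "\<forall>l\<in>R. z$l = 0" using Tu by (simp add: z_def)
    have Yu: "Y *v u = (1/\<alpha>) *s axis k 1"
    proof -
      have "axis k 1 = \<alpha> *s (Y *v u)" using YY[of "axis k 1"] unfolding Ye mv_smult by simp
      then show ?thesis using a0 by (simp add: cvec_eq_iff field_simps)
    qed
    have "Y *v (T *v (Y *v axis j 1)) = \<alpha> *s z + \<mu> *s axis k 1"
    proof -
      have "T *v u = z + \<mu> *s u" by (simp add: z_def)
      then have "Y *v (T *v u) = z + (\<mu> / \<alpha>) *s axis k 1"
        using Yfix zR by (simp add: mv_add mv_smult Yu)
      then show ?thesis using a0 unfolding jk Ye mv_smult
        by (simp add: cvec_eq_iff field_simps)
    qed
    moreover have "i \<in> R" "i \<noteq> k" using j2 \<open>rk lt j = n\<close> jk by (auto simp: R_def)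
    ultimately show ?thesis unfolding col using zR by (simp add: axis_def)
  qed
  then have "\<forall>i j. rk lt j < Suc n \<longrightarrow> rk lt j < rk lt i \<longrightarrow> (mat_adj W' ** M ** W')$i$j = 0"
    unfolding T' by blast
  then show ?case using W' by blast
qed

lemma schur:
  fixes M :: "complex^'k^'k" and lt :: "'k \<Rightarrow> 'k \<Rightarrow> bool"
  assumes lt: "sto lt"
  shows "\<exists>W T. unitary_mat W \<and> (\<forall>i j. lt j i \<longrightarrow> T$i$j = 0) \<and> M = W ** T ** mat_adj W"
proof -
  obtain W where W: "unitary_mat W"
    and Z: "\<forall>i j. rk lt j < CARD('k) \<longrightarrow> rk lt j < rk lt i \<longrightarrow> (mat_adj W ** M ** W)$i$j = 0"
    using schur_aux[OF lt, of "CARD('k)" M] by auto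
  define T where "T = mat_adj W ** M ** W"
  have "\<forall>i j. lt j i \<longrightarrow> T$i$j = 0" using Z rk_bound[OF lt] rk_iff[OF lt] by (simp add: T_def)
  moreover have "W ** T ** mat_adj W = (W ** mat_adj W) ** M ** (W ** mat_adj W)"
    unfolding T_def by (simp add: matrix_mul_assoc)
  then have "M = W ** T ** mat_adj W" using unitary_right[OF W] by simp
  ultimately show ?thesis using W by blast
qed


lemma perm_triang:
  fixes lt :: "'k::finite \<Rightarrow> 'k \<Rightarrow> bool"
  assumes lt: "sto lt" and p: "p permutes UNIV" and pid: "p \<noteq> id"
  shows "\<exists>i. lt (p i) i"
proof (rule ccontr)
  assume "\<not> (\<exists>i. lt (p i) i)"
  then have le: "rk lt i \<le> rk lt (p i)" for i
    using sto_tot[OF lt, of i "p i"] rk_mono[OF lt, of i "p i"] by (cases "p i = i") auto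
  have eq: "rk lt (p i) = rk lt i" for i
  proof (rule ccontr)
    assume "rk lt (p i) \<noteq> rk lt i"
    then have "rk lt i < rk lt (p i)" using le[of i] by simp
    then have "(\<Sum>i\<in>UNIV. rk lt i) < (\<Sum>i\<in>UNIV. rk lt (p i))"
      using le by (intro sum_strict_mono_ex1) auto
    moreover have "(\<Sum>i\<in>UNIV. rk lt i) = (\<Sum>i\<in>UNIV. rk lt (p i))"
      using sum.permute[OF p, of "rk lt"] by (simp add: comp_def)
    ultimately show False by simp
  qed
  have "p i = i" for i using eq[of i] rk_inj[OF lt] by (simp add: inj_def)
  then have "p = id" by auto
  with pid show False by simp
qed

lemma det_triang:
  fixes A :: "complex^'k^'k"
  assumes lt: "sto lt" and ld: "\<forall>i j. lt j i \<longrightarrow> A$i$j = 0"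
  shows "det A = (\<Prod>i\<in>UNIV. A$i$i)"
proof -
  let ?U = "UNIV:: 'k set"
  let ?PU = "{p. p permutes ?U}"
  let ?pp = "(\<lambda>p. of_int (sign p) * prod (\<lambda>i. A$i$p i) (UNIV :: 'k set))"
  have fU: "finite ?U" by simp
  have id0: "{id} \<subseteq> ?PU" by (auto simp: permutes_id)
  have p0: "\<forall>p \<in> ?PU -{id}. ?pp p = 0"
  proof
    fix p assume p: "p \<in> ?PU - {id}"
    then obtain i where i: "lt (p i) i" using perm_triang[OF lt] by blast
    from ld i have "\<exists>i \<in> ?U. A$i$p i = 0" by blast
    with prod_zero[OF fU] show "?pp p = 0" by force
  qed
  from sum.mono_neutral_cong_left[OF finite_permutations[OF fU] id0 p0] show ?thesis
    unfolding Determinants.det_def by (simp add: sign_id)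
qed

lemma sum_delta_c: "(\<Sum>j\<in>UNIV. (if i = j then c else 0) * f j) = (c * f (i::'k::finite) :: complex)"
proof -
  have "(\<Sum>j\<in>UNIV. (if i = j then c else 0) * f j) = (\<Sum>j\<in>UNIV. if j = i then c * f i else 0)"
    by (rule sum.cong) auto
  then show ?thesis by simp
qed

lemma mat_mv: "(mat c :: complex^'k^'k) *v x = c *s x"
  by (simp add: cvec_eq_iff matrix_vector_mult_def cmat_def sum_delta_c)

lemma eig_triang:
  fixes T :: "complex^'k^'k"
  assumes lt: "sto lt" and ld: "\<forall>i j. lt j i \<longrightarrow> T$i$j = 0"
  shows "is_eigenvalue T z \<longleftrightarrow> (\<exists>k. z = T$k$k)"
proof -
  define A where "A = T - mat z"
  have ldA: "\<forall>i j. lt j i \<longrightarrow> A$i$j = 0" using ld sto_irr[OF lt] unfolding A_def cmat_def by auto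
  have dA: "det A = (\<Prod>i\<in>UNIV. T$i$i - z)" using det_triang[OF lt ldA] by (simp add: A_def cmat_def)
  have "is_eigenvalue T z \<longleftrightarrow> (\<exists>v. v \<noteq> 0 \<and> A *v v = 0)"
    unfolding is_eigenvalue_def A_def by (simp add: matrix_vector_mult_diff_rdistrib mat_mv)
  also have "\<dots> \<longleftrightarrow> \<not> (\<exists>B. B ** A = mat 1)" unfolding matrix_left_invertible_ker by blast
  also have "\<dots> \<longleftrightarrow> det A = 0" using invertible_det_nz[of A] invertible_left_inverse[of A] by blast
  also have "\<dots> \<longleftrightarrow> (\<exists>k. z = T$k$k)" unfolding dA by auto
  finally show ?thesis .
qed

lemma spec_triang:
  fixes T :: "complex^'k^'k"
  assumes lt: "sto lt" and ld: "\<forall>i j. lt j i \<longrightarrow> T$i$j = 0"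
  shows "spec T = (\<lambda>k. T$k$k) ` UNIV"
  using eig_triang[OF assms] unfolding spec_def by auto

lemma spec_sim:
  fixes T :: "complex^'k^'k"
  assumes W: "unitary_mat W"
  shows "spec (W ** T ** mat_adj W) = spec T"
proof -
  have WW: "mat_adj W ** W = mat 1" "W ** mat_adj W = mat 1"
    using W unitary_right[OF W] unfolding unitary_mat_def by auto
  have m1: "mat_adj W ** (W ** T ** mat_adj W) = T ** mat_adj W"
    by (simp add: matrix_mul_assoc WW)
  have m2: "(W ** T ** mat_adj W) ** W = W ** T"
  proof -
    have "(W ** T ** mat_adj W) ** W = (W ** T) ** (mat_adj W ** W)" by (simp add: matrix_mul_assoc)
    then show ?thesis using WW by simp
  qed
  have inj1: "v = 0" if "A *v v = 0" "B ** A = mat 1" for A B :: "complex^'k^'k" and v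
  proof -
    have "B *v (A *v v) = 0" using that(1) by (simp only: matrix_vector_mult_0_right)
    then have "(B ** A) *v v = 0" by (simp only: matrix_vector_mul_assoc)
    then show "v = 0" unfolding that(2) by (simp only: matrix_vector_mul_lid)
  qed
  have 1: "is_eigenvalue T z" if ev: "is_eigenvalue (W ** T ** mat_adj W) z" for z
  proof -
    obtain v where v: "v \<noteq> 0" "(W ** T ** mat_adj W) *v v = z *s v"
      using ev unfolding is_eigenvalue_def by blast
    have "T *v (mat_adj W *v v) = (T ** mat_adj W) *v v" by (simp only: matrix_vector_mul_assoc)
    also have "\<dots> = mat_adj W *v ((W ** T ** mat_adj W) *v v)"
      unfolding m1[symmetric] by (simp only: matrix_vector_mul_assoc)
    also have "\<dots> = mat_adj W *v (z *s v)" by (simp only: v(2))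
    also have "\<dots> = z *s (mat_adj W *v v)" by (rule mv_smult)
    finally have e: "T *v (mat_adj W *v v) = z *s (mat_adj W *v v)" .
    have "mat_adj W *v v \<noteq> 0" using inj1[of "mat_adj W" v W] WW v(1) by blast
    then show ?thesis using e unfolding is_eigenvalue_def by blast
  qed
  have 2: "is_eigenvalue (W ** T ** mat_adj W) z" if ev: "is_eigenvalue T z" for z
  proof -
    obtain v where v: "v \<noteq> 0" "T *v v = z *s v"
      using ev unfolding is_eigenvalue_def by blast
    have "(W ** T ** mat_adj W) *v (W *v v) = ((W ** T ** mat_adj W) ** W) *v v"
      by (simp only: matrix_vector_mul_assoc)
    also have "\<dots> = W *v (T *v v)" unfolding m2 by (simp only: matrix_vector_mul_assoc)
    also have "\<dots> = W *v (z *s v)" by (simp only: v(2))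
    also have "\<dots> = z *s (W *v v)" by (rule mv_smult)
    finally have e: "(W ** T ** mat_adj W) *v (W *v v) = z *s (W *v v)" .
    have "W *v v \<noteq> 0" using inj1[of W v "mat_adj W"] WW v(1) by blast
    then show ?thesis using e unfolding is_eigenvalue_def by blast
  qed
  show ?thesis unfolding spec_def using 1 2 by blast
qed

lemma herm_diag:
  fixes H :: "complex^'k^'k" and lt :: "'k \<Rightarrow> 'k \<Rightarrow> bool"
  assumes lt: "sto lt" and H: "hermitian H"
  shows "\<exists>W \<Lambda>. unitary_mat W \<and> (\<forall>i j. i \<noteq> j \<longrightarrow> \<Lambda>$i$j = 0) \<and> (\<forall>i. Im (\<Lambda>$i$i) = 0)
     \<and> H = W ** \<Lambda> ** mat_adj W"
proof -
  obtain W T where W: "unitary_mat W" and ld: "\<forall>i j. lt j i \<longrightarrow> T$i$j = 0" and HT: "H = W ** T ** mat_adj W"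
    using schur[OF lt] by blast
  have WW: "mat_adj W ** W = mat 1" "W ** mat_adj W = mat 1"
    using W unitary_right[OF W] unfolding unitary_mat_def by auto
  have "mat_adj W ** H ** W = (mat_adj W ** W) ** T ** (mat_adj W ** W)"
    unfolding HT by (simp add: matrix_mul_assoc)
  then have TH: "T = mat_adj W ** H ** W" using WW by simp
  have Tadj: "mat_adj T = T" unfolding TH mat_adj_mult using H unfolding hermitian_def
    by (simp add: matrix_mul_assoc)
  have Tij: "T$i$j = cnj (T$j$i)" for i j
  proof -
    have "T$i$j = (mat_adj T)$i$j" using Tadj by simp
    also have "\<dots> = cnj (T$j$i)" by (simp add: mat_adj_def)
    finally show ?thesis .
  qed
  have off: "T$i$j = 0" if "i \<noteq> j" for i j
    using sto_tot[OF lt that] ld Tij[of i j] by auto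
  have "Im (T$i$i) = 0" for i
  proof -
    have "Im (T$i$i) = Im (cnj (T$i$i))" using Tij[of i i] by simp
    then show ?thesis by simp
  qed
  then show ?thesis using W off HT by blast
qed

lemma diag_mv: assumes "\<forall>i j. i \<noteq> j \<longrightarrow> \<Lambda>$i$j = 0"
  shows "((\<Lambda>::complex^'k^'k) *v y)$i = \<Lambda>$i$i * y$i"
proof -
  have "(\<Lambda> *v y)$i = (\<Sum>j\<in>UNIV. \<Lambda>$i$j * y$j)" by (simp add: matrix_vector_mult_def)
  also have "\<dots> = (\<Sum>j\<in>UNIV. if j = i then \<Lambda>$i$i * y$i else 0)"
    using assms by (intro sum.cong) auto
  finally show ?thesis by simp
qed

lemma sigma_min_facts:
  fixes M :: "complex^'k^'k" and lt :: "'k \<Rightarrow> 'k \<Rightarrow> bool"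
  assumes lt: "sto lt"
  shows "\<exists>v. norm v = 1 \<and> sigma_min M = norm (M *v v)"
    and "\<forall>x. sigma_min M * norm x \<le> norm (M *v x)"
proof -
  define H where "H = mat_adj M ** M"
  have Hh: "hermitian H" unfolding hermitian_def H_def mat_adj_mult by simp
  obtain W \<Lambda> where W: "unitary_mat W" and off: "\<forall>i j. i \<noteq> j \<longrightarrow> \<Lambda>$i$j = 0"
    and re: "\<forall>i. Im (\<Lambda>$i$i) = 0" and HW: "H = W ** \<Lambda> ** mat_adj W"
    using herm_diag[OF lt Hh] by blast
  have ld: "\<forall>i j. lt j i \<longrightarrow> \<Lambda>$i$j = 0"
  proof (intro allI impI)
    fix i j assume "lt j i"
    then have "i \<noteq> j" using sto_irr[OF lt] by auto
    then show "\<Lambda>$i$j = 0" using off by simp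
  qed
  have sp: "spec H = (\<lambda>k. \<Lambda>$k$k) ` UNIV" unfolding HW spec_sim[OF W] by (rule spec_triang[OF lt ld])
  define \<mu> where "\<mu> = Min (Re ` spec H)"
  have fin: "finite (Re ` spec H)" "Re ` spec H \<noteq> {}" unfolding sp by auto
  have "\<mu> \<in> Re ` spec H" unfolding \<mu>_def using fin by (rule Min_in)
  then obtain k where k: "\<mu> = Re (\<Lambda>$k$k)" unfolding sp by auto
  have mu_le: "\<mu> \<le> Re (\<Lambda>$j$j)" for j unfolding \<mu>_def using fin sp by (auto intro: Min_le)
  have sm: "sigma_min M = sqrt \<mu>" unfolding sigma_min_def \<mu>_def H_def ..
  have quad: "cinner x (H *v x) = complex_of_real ((norm (M *v x))^2)" for x
    unfolding H_def by (simp add: matrix_vector_mul_assoc[symmetric] cinner_adj cinner_self)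
  have quad2: "Re (cinner x (H *v x)) = (\<Sum>i\<in>UNIV. Re (\<Lambda>$i$i) * (norm ((mat_adj W *v x)$i))^2)" for x
  proof -
    define y where "y = mat_adj W *v x"
    have "cinner x (H *v x) = cinner y (\<Lambda> *v y)"
      unfolding HW y_def by (simp add: matrix_vector_mul_assoc[symmetric] cinner_adj)
    also have "\<dots> = (\<Sum>i\<in>UNIV. cnj (y$i) * (\<Lambda>$i$i * y$i))"
      unfolding cinner_def diag_mv[OF off] ..
    finally have "Re (cinner x (H *v x)) = (\<Sum>i\<in>UNIV. Re (cnj (y$i) * (\<Lambda>$i$i * y$i)))" by simp
    also have "\<dots> = (\<Sum>i\<in>UNIV. Re (\<Lambda>$i$i) * (norm (y$i))^2)"
    proof (rule sum.cong)
      fix i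
      have "\<Lambda>$i$i = complex_of_real (Re (\<Lambda>$i$i))" using re by (simp add: complex_eq_iff)
      have cy: "cnj (y$i) * y$i = complex_of_real ((norm (y$i))^2)"
        by (metis complex_norm_square mult.commute of_real_power)
      have "cnj (y$i) * (\<Lambda>$i$i * y$i) = \<Lambda>$i$i * (cnj (y$i) * y$i)" by (simp add: mult_ac)
      also have "\<dots> = complex_of_real (Re (\<Lambda>$i$i) * (norm (y$i))^2)"
        unfolding cy by (subst \<open>\<Lambda>$i$i = _\<close>) (simp only: of_real_mult)
      finally show "Re (cnj (y$i) * (\<Lambda>$i$i * y$i)) = Re (\<Lambda>$i$i) * (norm (y$i))^2"
        by (simp only: Re_complex_of_real)
    qed simp
    finally show ?thesis unfolding y_def .
  qed
  have lower: "\<mu> * (norm x)^2 \<le> (norm (M *v x))^2" for x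
  proof -
    have "\<mu> * (norm x)^2 = \<mu> * (norm (mat_adj W *v x))^2"
      using unitary_norm[OF unitary_adj[OF W]] by simp
    also have "\<dots> = (\<Sum>i\<in>UNIV. \<mu> * (norm ((mat_adj W *v x)$i))^2)"
      unfolding norm_sq_vec by (simp add: sum_distrib_left)
    also have "\<dots> \<le> (\<Sum>i\<in>UNIV. Re (\<Lambda>$i$i) * (norm ((mat_adj W *v x)$i))^2)"
      by (rule sum_mono) (simp add: mu_le mult_right_mono)
    also have "\<dots> = (norm (M *v x))^2" using quad2[of x] quad[of x] by simp
    finally show ?thesis .
  qed
  define v where "v = W *v axis k 1"
  have nv: "norm v = 1" unfolding v_def unitary_norm[OF W] by (simp add: norm_axis_c)
  have ax: "mat_adj W *v v = axis k 1" unfolding v_def using W unfolding unitary_mat_def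
    by (simp add: matrix_vector_mul_assoc)
  have "Re (cinner v (H *v v)) = (\<Sum>i\<in>UNIV. Re (\<Lambda>$i$i) * (norm (axis k (1::complex) $ i))^2)"
    by (simp only: quad2 ax)
  also have "\<dots> = (\<Sum>i\<in>UNIV. if i = k then Re (\<Lambda>$k$k) else 0)"
    by (rule sum.cong) (auto simp: axis_def)
  also have "\<dots> = \<mu>" using k by simp
  finally have r: "Re (cinner v (H *v v)) = \<mu>" .
  have "Re (cinner v (H *v v)) = (norm (M *v v))^2" by (simp only: quad Re_complex_of_real)
  then have mv: "(norm (M *v v))^2 = \<mu>" using r by linarith
  then have mu0: "\<mu> \<ge> 0" using zero_le_power2[of "norm (M *v v)"] by linarith
  have "sigma_min M = norm (M *v v)" unfolding sm by (rule real_sqrt_unique[OF mv norm_ge_zero])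
  then show "\<exists>v. norm v = 1 \<and> sigma_min M = norm (M *v v)" using nv by blast
  show "\<forall>x. sigma_min M * norm x \<le> norm (M *v x)"
  proof
    fix x
    have "(sigma_min M * norm x)^2 \<le> (norm (M *v x))^2"
      unfolding sm power_mult_distrib using lower[of x] mu0 by simp
    then show "sigma_min M * norm x \<le> norm (M *v x)"
      by (rule power2_le_imp_le[OF _ norm_ge_zero])
  qed
qed


lemma sto_lex: "sto (lex_less3 :: ('n::linorder \<times> bool \<times> 'm::linorder) \<Rightarrow> _ \<Rightarrow> bool)"
  unfolding sto_def
proof (intro conjI allI impI)
  fix x :: "'n \<times> bool \<times> 'm"
  show "\<not> lex_less3 x x" by (cases x) (auto simp: lex_less3_def)
next
  fix x y z :: "'n \<times> bool \<times> 'm"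
  assume "lex_less3 x y" "lex_less3 y z"
  then show "lex_less3 x z"
    by (cases x, cases y, cases z) (auto simp: lex_less3_def less_bool_def)
next
  fix x y :: "'n \<times> bool \<times> 'm"
  assume "x \<noteq> y"
  then show "lex_less3 x y \<or> lex_less3 y x"
    by (cases x, cases y) (auto simp: lex_less3_def less_bool_def neq_iff)
qed

lemma kron_adj: "mat_adj (kron A G) = kron (mat_adj A) (mat_adj G)"
  by (simp add: cvec_eq_iff kron_def mat_adj_def)

lemma kron_dist: "kron (X - Y) (P + Q) = kron X P + kron X Q - kron Y P - kron Y Q"
  by (simp add: cvec_eq_iff kron_def algebra_simps)

lemma P_adj: "mat_adj (P_proj :: complex^(bool \<times> ('m::finite))^(bool \<times> 'm)) = P_proj"
  by (auto simp: cvec_eq_iff P_proj_def mat_adj_def)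

lemma Q_adj: "mat_adj (Q_proj :: complex^(bool \<times> ('m::finite))^(bool \<times> 'm)) = Q_proj"
  by (auto simp: cvec_eq_iff Q_proj_def mat_adj_def)

lemma PQ: "(P_proj :: complex^(bool \<times> ('m::finite))^(bool \<times> 'm)) + Q_proj = mat 1"
  by (auto simp: cvec_eq_iff Q_proj_def P_proj_def cmat_def)

lemma loc_adj_diff:
  assumes cl: "clifford_rep d \<Gamma>" and herm: "\<forall>i<d. hermitian (A i)"
  shows "localizer d \<Gamma> A B lam \<nu> - mat_adj (localizer d \<Gamma> A B lam \<nu>)
     = kron ((B - mat \<nu>) - mat_adj (B - mat \<nu>)) (mat 1)"
proof -
  define S where "S = (\<Sum>i<d. kron (A i - mat (complex_of_real (lam i))) (\<Gamma> i))"
  define C where "C = B - mat \<nu>"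
  have L: "localizer d \<Gamma> A B lam \<nu> = S + kron C P_proj - kron (mat_adj C) Q_proj"
    unfolding localizer_def S_def C_def ..
  have Sadj: "mat_adj S = S" unfolding S_def mat_adj_sum kron_adj
  proof (rule sum.cong)
    fix i assume "i \<in> {..<d}"
    then have "hermitian (A i)" "hermitian (\<Gamma> i)" using herm cl unfolding clifford_rep_def by auto
    then show "kron (mat_adj (A i - mat (complex_of_real (lam i)))) (mat_adj (\<Gamma> i))
        = kron (A i - mat (complex_of_real (lam i))) (\<Gamma> i)"
      unfolding hermitian_def mat_adj_diff mat_adj_mat by simp
  qed simp
  have La: "mat_adj (localizer d \<Gamma> A B lam \<nu>) = S + kron (mat_adj C) P_proj - kron C Q_proj"
  proof -
    have "mat_adj (localizer d \<Gamma> A B lam \<nu>) = mat_adj S + mat_adj (kron C P_proj) - mat_adj (kron (mat_adj C) Q_proj)"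
      unfolding L by (simp only: mat_adj_diff mat_adj_add)
    also have "\<dots> = S + kron (mat_adj C) P_proj - kron C Q_proj"
      by (simp only: kron_adj Sadj P_adj Q_adj mat_adj_adj)
    finally show ?thesis .
  qed
  have "localizer d \<Gamma> A B lam \<nu> - mat_adj (localizer d \<Gamma> A B lam \<nu>)
      = kron C P_proj + kron C Q_proj - kron (mat_adj C) P_proj - kron (mat_adj C) Q_proj"
    unfolding La unfolding L by (simp add: algebra_simps)
  also have "\<dots> = kron (C - mat_adj C) (P_proj + Q_proj)" unfolding kron_dist ..
  finally show ?thesis unfolding PQ C_def .
qed

lemma sum_univ_prod: "(\<Sum>q\<in>(UNIV::('a::finite \<times> 'b::finite) set). f q) = (\<Sum>a\<in>UNIV. \<Sum>b\<in>UNIV. f (a,b))"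
  using sum.cartesian_product'[of f "UNIV::'a set" "UNIV::'b set"] by (simp only: UNIV_Times_UNIV)

lemma kron_id_norm:
  fixes X :: "complex^'n^'n" and v :: "complex^('n \<times> ('b::finite))"
  shows "norm ((kron X (mat 1 :: complex^'b^'b)) *v v) \<le> op_norm X * norm v"
proof -
  define vs where "vs s = (\<chi> a. v$(a,s))" for s
  have entry: "((kron X (mat 1 :: complex^'b^'b)) *v v)$(a,s) = (X *v vs s)$a" for a s
  proof -
    have "((kron X (mat 1 :: complex^'b^'b)) *v v)$(a,s)
        = (\<Sum>q\<in>UNIV. X$a$(fst q) * (mat 1 :: complex^'b^'b)$s$(snd q) * v$q)"
      by (simp add: matrix_vector_mult_def kron_def)
    also have "\<dots> = (\<Sum>a'\<in>UNIV. \<Sum>s'\<in>UNIV. X$a$a' * (mat 1 :: complex^'b^'b)$s$s' * v$(a',s'))"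
      by (subst sum_univ_prod) simp
    also have "\<dots> = (\<Sum>a'\<in>UNIV. X$a$a' * v$(a',s))"
    proof (rule sum.cong)
      fix a' show "(\<Sum>s'\<in>UNIV. X$a$a' * (mat 1 :: complex^'b^'b)$s$s' * v$(a',s')) = X$a$a' * v$(a',s)"
      proof -
        have "(\<Sum>s'\<in>UNIV. X$a$a' * (mat 1 :: complex^'b^'b)$s$s' * v$(a',s'))
            = (\<Sum>s'\<in>UNIV. if s' = s then X$a$a' * v$(a',s) else 0)"
          by (rule sum.cong) (auto simp: cmat_def)
        then show ?thesis by simp
      qed
    qed simp
    also have "\<dots> = (X *v vs s)$a" by (simp add: matrix_vector_mult_def vs_def)
    finally show ?thesis .
  qed
  have "(norm ((kron X (mat 1 :: complex^'b^'b)) *v v))^2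
      = (\<Sum>a\<in>UNIV. \<Sum>s\<in>UNIV. (norm (((kron X (mat 1 :: complex^'b^'b)) *v v)$(a,s)))^2)"
    unfolding norm_sq_vec by (rule sum_univ_prod)
  also have "\<dots> = (\<Sum>a\<in>UNIV. \<Sum>s\<in>UNIV. (norm ((X *v vs s)$a))^2)"
    by (simp only: entry)
  also have "\<dots> = (\<Sum>s\<in>UNIV. \<Sum>a\<in>UNIV. (norm ((X *v vs s)$a))^2)" by (rule sum.swap)
  also have "\<dots> = (\<Sum>s\<in>UNIV. (norm (X *v vs s))^2)" unfolding norm_sq_vec by (rule refl)
  also have "\<dots> \<le> (\<Sum>s\<in>UNIV. (op_norm X * norm (vs s))^2)"
    by (rule sum_mono, rule power_mono[OF op_norm_bound norm_ge_zero])
  also have "\<dots> = (\<Sum>s\<in>UNIV. (op_norm X)^2 * (\<Sum>a\<in>UNIV. (norm (v$(a,s)))^2))"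
  proof (rule sum.cong)
    fix s
    show "(op_norm X * norm (vs s))^2 = (op_norm X)^2 * (\<Sum>a\<in>UNIV. (norm (v$(a,s)))^2)"
      unfolding power_mult_distrib norm_sq_vec vs_def by simp
  qed (rule refl)
  also have "\<dots> = (op_norm X)^2 * (\<Sum>s\<in>UNIV. \<Sum>a\<in>UNIV. (norm (v$(a,s)))^2)"
    by (rule sum_distrib_left[symmetric])
  also have "(\<Sum>s\<in>UNIV. \<Sum>a\<in>UNIV. (norm (v$(a,s)))^2) = (\<Sum>a\<in>UNIV. \<Sum>s\<in>UNIV. (norm (v$(a,s)))^2)"
    by (rule sum.swap)
  also have "(\<Sum>a\<in>UNIV. \<Sum>s\<in>UNIV. (norm (v$(a,s)))^2) = (norm v)^2"
    unfolding norm_sq_vec[of v] by (rule sum_univ_prod[symmetric])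
  also have "(op_norm X)^2 * (norm v)^2 = (op_norm X * norm v)^2" by (rule power_mult_distrib[symmetric])
  finally have "(norm ((kron X (mat 1 :: complex^'b^'b)) *v v))^2 \<le> (op_norm X * norm v)^2" .
  then show ?thesis
    by (rule power2_le_imp_le[OF _ mult_nonneg_nonneg[OF op_norm_nonneg norm_ge_zero]])
qed

lemma cinner_scale_left: "cinner (c *s x) y = cnj c * cinner x y"
  unfolding cinner_def by (simp add: sum_distrib_left mult_ac)

lemma im_bound:
  fixes L :: "complex^'k^'k"
  assumes ev: "is_eigenvalue L z" and K: "\<forall>v. norm ((L - mat_adj L) *v v) \<le> c * norm v"
  shows "2 * \<bar>Im z\<bar> \<le> c"
proof -
  obtain v where v0: "v \<noteq> 0" and Lv: "L *v v = z *s v" using ev unfolding is_eigenvalue_def by blast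
  define n where "n = norm v"
  have n0: "n > 0" using v0 by (simp add: n_def)
  have c1: "cinner v (L *v v) = z * complex_of_real (n^2)"
    unfolding Lv cinner_scale cinner_self n_def ..
  have c2: "cinner v (mat_adj L *v v) = cnj z * complex_of_real (n^2)"
    unfolding cinner_adj mat_adj_adj Lv cinner_scale_left cinner_self n_def ..
  have "cinner v ((L - mat_adj L) *v v) = (z - cnj z) * complex_of_real (n^2)"
    unfolding matrix_vector_mult_diff_rdistrib cinner_diff c1 c2 by (simp add: algebra_simps)
  then have "norm (cinner v ((L - mat_adj L) *v v)) = 2 * \<bar>Im z\<bar> * n^2"
    using n0 by (simp add: complex_diff_cnj norm_mult norm_power)
  moreover have "norm (cinner v ((L - mat_adj L) *v v)) \<le> n * (c * n)"
    using cinner_CS[of v "(L - mat_adj L) *v v"] K mult_left_mono[OF _ norm_ge_zero]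
    unfolding n_def by (meson order_trans)
  ultimately have "2 * \<bar>Im z\<bar> * n^2 \<le> c * n^2" by (simp add: power2_eq_square mult_ac)
  then show ?thesis using n0 by simp
qed

lemma spec_fin:
  fixes L :: "complex^'k^'k" and lt :: "'k \<Rightarrow> 'k \<Rightarrow> bool"
  assumes lt: "sto lt"
  shows "finite (spec L)" "spec L \<noteq> {}"
proof -
  obtain W T where W: "unitary_mat W" and ld: "\<forall>i j. lt j i \<longrightarrow> T$i$j = 0" and LT: "L = W ** T ** mat_adj W"
    using schur[OF lt] by blast
  have "spec L = (\<lambda>k. T$k$k) ` UNIV" unfolding LT spec_sim[OF W] by (rule spec_triang[OF lt ld])
  then show "finite (spec L)" "spec L \<noteq> {}" by auto
qed

lemma rg_le:
  fixes L :: "complex^'k^'k" and lt :: "'k \<Rightarrow> 'k \<Rightarrow> bool"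
  assumes lt: "sto lt" and im: "\<forall>z\<in>spec L. \<bar>Im z\<bar> \<le> c"
  shows "sigma_min L \<le> Min ((\<lambda>z. \<bar>Re z\<bar>) ` spec L) + c"
proof -
  have fin: "finite ((\<lambda>z. \<bar>Re z\<bar>) ` spec L)" "(\<lambda>z. \<bar>Re z\<bar>) ` spec L \<noteq> {}"
    using spec_fin[OF lt, of L] by auto
  have "Min ((\<lambda>z. \<bar>Re z\<bar>) ` spec L) \<in> (\<lambda>z. \<bar>Re z\<bar>) ` spec L" using fin by (rule Min_in)
  then obtain z where z: "z \<in> spec L" and zm: "\<bar>Re z\<bar> = Min ((\<lambda>z. \<bar>Re z\<bar>) ` spec L)" by auto
  obtain v where v0: "v \<noteq> 0" and Lv: "L *v v = z *s v" using z unfolding spec_def is_eigenvalue_def by blast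
  have "sigma_min L * norm v \<le> norm (L *v v)" using sigma_min_facts(2)[OF lt] by blast
  also have "\<dots> = cmod z * norm v" unfolding Lv norm_smult_vec ..
  finally have "sigma_min L \<le> cmod z" using v0 by simp
  also have "\<dots> \<le> \<bar>Re z\<bar> + \<bar>Im z\<bar>" by (rule cmod_le)
  also have "\<dots> \<le> Min ((\<lambda>z. \<bar>Re z\<bar>) ` spec L) + c" using zm im z by simp
  finally show ?thesis .
qed

lemma diag_norm_lower:
  fixes D :: "complex^'k^'k"
  assumes off: "\<forall>i j. i \<noteq> j \<longrightarrow> D$i$j = 0" and c: "\<forall>j. c \<le> cmod (D$j$j)" and c0: "0 \<le> c"
  shows "c * norm y \<le> norm (D *v y)"
proof -
  have "c * norm y = L2_set (\<lambda>i. c * norm (y$i)) UNIV"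
    unfolding norm_vec_def using c0 by (rule L2_set_right_distrib)
  also have "\<dots> \<le> L2_set (\<lambda>i. norm ((D *v y)$i)) UNIV"
  proof (rule L2_set_mono)
    fix i
    show "c * norm (y$i) \<le> norm ((D *v y)$i)"
      unfolding diag_mv[OF off] norm_mult using c by (simp add: mult_right_mono)
    show "0 \<le> c * norm (y$i)" using c0 by simp
  qed
  also have "\<dots> = norm (D *v y)" by (simp add: norm_vec_def)
  finally show ?thesis .
qed

lemma lg_le:
  fixes L W D U :: "complex^'k^'k" and lt :: "'k \<Rightarrow> 'k \<Rightarrow> bool"
  assumes lt: "sto lt" and W: "unitary_mat W" and D: "diagonal_mat D" and U: "strictly_upper lt U"
    and LW: "L = W ** (D + U) ** mat_adj W"
  shows "Min ((\<lambda>z. \<bar>Re z\<bar>) ` spec L) \<le> sigma_min L + op_norm U"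
proof -
  define T where "T = D + U"
  have offD: "\<forall>i j. i \<noteq> j \<longrightarrow> D$i$j = 0" using D unfolding Defs.diagonal_mat_def by blast
  have Uz: "\<forall>i j. \<not> lt i j \<longrightarrow> U$i$j = 0" using U unfolding strictly_upper_def by blast
  have ld: "\<forall>i j. lt j i \<longrightarrow> T$i$j = 0"
  proof (intro allI impI)
    fix i j assume h: "lt j i"
    then have "i \<noteq> j" using sto_irr[OF lt] by auto
    moreover have "\<not> lt i j" using h sto_trans[OF lt, of i j i] sto_irr[OF lt, of i] by auto
    ultimately show "T$i$j = 0" using offD Uz by (simp add: T_def)
  qed
  have Tkk: "T$k$k = D$k$k" for k using Uz sto_irr[OF lt, of k] by (simp add: T_def)
  have sp: "spec L = (\<lambda>k. D$k$k) ` UNIV"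
    unfolding LW T_def[symmetric] spec_sim[OF W] spec_triang[OF lt ld] Tkk ..
  define m where "m = Min ((\<lambda>j. cmod (D$j$j)) ` UNIV)"
  have "m \<in> (\<lambda>j. cmod (D$j$j)) ` UNIV" unfolding m_def by (rule Min_in) auto
  then obtain k where k: "m = cmod (D$k$k)" by auto
  have mle: "\<forall>j. m \<le> cmod (D$j$j)" unfolding m_def by (auto intro: Min_le)
  have fin: "finite ((\<lambda>z. \<bar>Re z\<bar>) ` spec L)" using spec_fin[OF lt, of L] by auto
  have "Min ((\<lambda>z. \<bar>Re z\<bar>) ` spec L) \<le> \<bar>Re (D$k$k)\<bar>"
    using fin by (rule Min_le) (simp add: sp)
  also have "\<dots> \<le> m" unfolding k by (rule abs_Re_le_cmod)
  also have "m \<le> sigma_min L + op_norm U"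
  proof -
    obtain v where nv: "norm v = 1" and sv: "sigma_min L = norm (L *v v)"
      using sigma_min_facts(1)[OF lt, of L] by blast
    define y where "y = mat_adj W *v v"
    have ny: "norm y = 1" unfolding y_def unitary_norm[OF unitary_adj[OF W]] nv ..
    have "L *v v = W *v (T *v y)" unfolding LW T_def[symmetric] y_def
      by (simp add: matrix_vector_mul_assoc matrix_mul_assoc)
    then have nL: "norm (L *v v) = norm (T *v y)" by (simp add: unitary_norm[OF W])
    have "m = m * norm y" using ny by simp
    also have "\<dots> \<le> norm (D *v y)"
      by (rule diag_norm_lower[OF offD mle]) (simp add: m_def)
    also have "D *v y = T *v y - U *v y" by (simp add: T_def matrix_vector_mult_add_rdistrib)
    also have "norm (T *v y - U *v y) \<le> norm (T *v y) + norm (U *v y)" by (rule norm_triangle_ineq4)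
    also have "norm (U *v y) \<le> op_norm U" using op_norm_bound[of U y] ny by simp
    finally show ?thesis using nL sv by simp
  qed
  finally show ?thesis .
qed

theorem mainTheorem11:
  fixes d :: nat
    and \<Gamma> :: "nat \<Rightarrow> complex^(bool \<times> ('m::{finite,linorder}))^(bool \<times> ('m::{finite,linorder}))"
    and A :: "nat \<Rightarrow> complex^('n::{finite,linorder})^('n::{finite,linorder})"
    and B :: "complex^('n::{finite,linorder})^('n::{finite,linorder})"
    and lam :: "nat \<Rightarrow> real"
    and \<nu> :: complex
  assumes "d \<ge> 1"
    and "clifford_rep d \<Gamma>"
    and "\<forall>i<d. hermitian (A i)"
  shows "\<bar>clifford_linear_gap d \<Gamma> A B lam \<nu> - clifford_radial_gap d \<Gamma> A B lam \<nu>\<bar>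
     \<le> sqrt (real CARD('n \<times> bool \<times> 'm)) * op_norm ((B - mat \<nu>) - mat_adj (B - mat \<nu>))
       + dev_normality lex_less3 (localizer d \<Gamma> A B lam \<nu>)"
proof -
  define L where "L = localizer d \<Gamma> A B lam \<nu>"
  define X where "X = (B - mat \<nu>) - mat_adj (B - mat \<nu>)"
  define LG where "LG = Min ((\<lambda>z. \<bar>Re z\<bar>) ` spec L)"
  define RG where "RG = sigma_min L"
  define sN where "sN = sqrt (real CARD('n \<times> bool \<times> 'm))"
  have lt: "sto (lex_less3 :: ('n \<times> bool \<times> 'm) \<Rightarrow> _ \<Rightarrow> bool)" by (rule sto_lex)
  have K: "\<forall>v. norm ((L - mat_adj L) *v v) \<le> op_norm X * norm v"
    unfolding L_def X_def loc_adj_diff[OF assms(2,3)] using kron_id_norm by blast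
  have im: "\<forall>z\<in>spec L. \<bar>Im z\<bar> \<le> op_norm X"
  proof
    fix z assume "z \<in> spec L"
    then have "2 * \<bar>Im z\<bar> \<le> op_norm X" using im_bound[OF _ K] unfolding spec_def by blast
    then show "\<bar>Im z\<bar> \<le> op_norm X" by simp
  qed
  have A1: "RG \<le> LG + op_norm X" unfolding RG_def LG_def by (rule rg_le[OF lt im])
  define S where "S = {op_norm U |U. \<exists>W D. unitary_mat W \<and> diagonal_mat D \<and>
      strictly_upper lex_less3 U \<and> L = W ** (D + U) ** mat_adj W}"
  have dev: "dev_normality lex_less3 L = Inf S" unfolding dev_normality_def S_def ..
  have X0: "0 \<le> op_norm X" by (rule op_norm_nonneg)
  have sN1: "1 \<le> sN"
  proof -
    have "0 < CARD('n)" "0 < CARD('m)" by simp_all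
    then have "1 \<le> CARD('n) * (2 * CARD('m))" by (simp add: Suc_le_eq)
    then have "(1::real) \<le> real (CARD('n) * (2 * CARD('m)))" by (metis of_nat_1 of_nat_le_iff)
    then show ?thesis unfolding sN_def by simp
  qed
  have bound: "\<bar>LG - RG\<bar> - sN * op_norm X \<le> u" if uS: "u \<in> S" for u
  proof -
    obtain U W D where u: "u = op_norm U" and W: "unitary_mat W" and D: "diagonal_mat D"
      and U: "strictly_upper lex_less3 U" and LW: "L = W ** (D + U) ** mat_adj W"
      using uS unfolding S_def by blast
    have "LG \<le> RG + u" unfolding LG_def RG_def u by (rule lg_le[OF lt W D U LW])
    moreover have "op_norm X \<le> sN * op_norm X" using mult_right_mono[OF sN1 X0] by simp
    moreover have "0 \<le> u" unfolding u by (rule op_norm_nonneg)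
    ultimately show ?thesis using A1 X0 by linarith
  qed
  have Sne: "S \<noteq> {}"
  proof -
    obtain W T where W: "unitary_mat W" and ld: "\<forall>i j. lex_less3 j i \<longrightarrow> T$i$j = 0"
      and LT: "L = W ** T ** mat_adj W" using schur[OF lt] by blast
    define D where "D = (\<chi> i j. if i = j then T$i$j else 0)"
    define U where "U = (\<chi> i j. if lex_less3 i j then T$i$j else 0)"
    have "D + U = T"
    proof -
      have "(D + U)$i$j = T$i$j" for i j
      proof (cases "i = j")
        case True then show ?thesis using sto_irr[OF lt, of i] by (simp add: D_def U_def)
      next
        case False
        then have "lex_less3 i j \<or> lex_less3 j i" using sto_tot[OF lt] by blast
        then show ?thesis
        proof
          assume "lex_less3 i j" then show ?thesis using False by (simp add: D_def U_def)
        next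
          assume h: "lex_less3 j i"
          then have "T$i$j = 0" using ld by blast
          moreover have "\<not> lex_less3 i j" using h sto_trans[OF lt, of i j i] sto_irr[OF lt, of i] by blast
          ultimately show ?thesis using False by (simp add: D_def U_def)
        qed
      qed
      then show ?thesis by (simp add: cvec_eq_iff)
    qed
    moreover have "diagonal_mat D" unfolding Defs.diagonal_mat_def D_def by simp
    moreover have "strictly_upper lex_less3 U" unfolding strictly_upper_def U_def by simp
    ultimately have "op_norm U \<in> S" unfolding S_def using W LT by blast
    then show ?thesis by blast
  qed
  have "\<bar>LG - RG\<bar> - sN * op_norm X \<le> Inf S" using Sne bound by (rule cInf_greatest)
  then have "\<bar>LG - RG\<bar> \<le> sN * op_norm X + dev_normality lex_less3 L" using dev by linarith
  then show ?thesis
    by (simp only: clifford_linear_gap_def clifford_radial_gap_def LG_def RG_def sN_def L_def X_def)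
qed

end
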